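(* Let $\Phi:[0,\infty)\to[0,\infty)$ be a continuous, increasing, convex, differentiable function with $\Phi(0)=0$ and $\int^{+\infty}\frac{dt}{\Phi(t)}<+\infty$. Let $\Psi:(0,1]\to\mathbb{R}_+$ be a decreasing function such that $s\mapsto s\Psi(s)$ is increasing. Assume there is a constant $C>0$ such that \[ \Psi(s)\le C\,\Phi'(t)\qquad\text{where } s=\frac{1}{\Phi(t)\Phi'(t)}, \] for all sufficiently large $t$. Then there is a constant $C'$, depending only on $\Phi$, $\Psi$ and $C$, such that for every interval $I\subset\mathbb{R}$ and every weight $w\ge 0$ on $I$, with $N=N_I^w$, \[ \mathbf{n}_\Psi(N):=\int_0^\infty N(t)\Psi(N(t))\,dt\le C'\,\|w\|_{L^\Phi(I)}. \]
   Context: For an interval $I$ and a nonnegative function $w$ on $I$, the normalized distribution function is $N_I^w(t)=\frac{1}{|I|}\,|\{x\in I: w(x)>t\}|$, $t>0$; in the integrand the quantity $N(t)\Psi(N(t))$ is taken to be $0$ when $N(t)=0$. The Orlicz (Luxemburg) norm is $\|w\|_{L^\Phi(I)}=\inf\{\lambda>0:\frac{1}{|I|}\int_I\Phi(w/\lambda)\,dx\le 1\}$. *)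

theory Defs
  imports "HOL-Analysis.Analysis"
begin

definition norm_distr :: "real set \<Rightarrow> (real \<Rightarrow> real) \<Rightarrow> real \<Rightarrow> real" where
  "norm_distr I w t = measure lebesgue {x \<in> I. w x > t} / measure lebesgue I"

definition n_Psi :: "(real \<Rightarrow> real) \<Rightarrow> (real \<Rightarrow> real) \<Rightarrow> ennreal" where
  "n_Psi \<Psi> N = (\<integral>\<^sup>+ t\<in>{0<..}. ennreal (if N t = 0 then 0 else N t * \<Psi> (N t)) \<partial>lborel)"

text \<open>Luxemburg norm; the infimum of the empty set is \<top> (= +oo).\<close>
definition luxemburg_norm :: "(real \<Rightarrow> real) \<Rightarrow> real set \<Rightarrow> (real \<Rightarrow> real) \<Rightarrow> ennreal" where
  "luxemburg_norm \<Phi> I w = Inf {ennreal r | r. r > 0 \<and>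
      ennreal (1 / measure lebesgue I) * (\<integral>\<^sup>+ x\<in>I. ennreal (\<Phi> (w x / r)) \<partial>lebesgue) \<le> 1}"

end

theory Submission imports Defs begin
lemma deriv_slope:
  fixes \<Phi> \<Phi>' :: "real \<Rightarrow> real" and x y :: real
  assumes conv: "convex_on {0..} \<Phi>"
    and der: "\<And>t. t \<ge> 0 \<Longrightarrow> (\<Phi> has_real_derivative \<Phi>' t) (at t within {0..})"
    and xy: "0 \<le> x" "x < y"
  shows "\<Phi>' x \<le> (\<Phi> y - \<Phi> x)/(y - x)" and "(\<Phi> y - \<Phi> x)/(y - x) \<le> \<Phi>' y"
proof -
  have sub: "{x..y} \<subseteq> {0..}" using xy by auto
  have d1: "(\<Phi> has_real_derivative \<Phi>' x) (at x within {x..y})"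
    using DERIV_subset[OF der[of x] sub] xy by simp
  hence l1: "((\<lambda>t. (\<Phi> t - \<Phi> x) / (t - x)) \<longlongrightarrow> \<Phi>' x) (at_right x)"
    using has_field_derivative_iff at_within_Icc_at_right[OF xy(2)] by metis
  show "\<Phi>' x \<le> (\<Phi> y - \<Phi> x)/(y - x)"
  proof (rule tendsto_upperbound[OF l1])
    show "\<forall>\<^sub>F t in at_right x. (\<Phi> t - \<Phi> x) / (t - x) \<le> (\<Phi> y - \<Phi> x) / (y - x)"
      unfolding eventually_at_right[OF xy(2)]
    proof (intro exI[of _ y] conjI allI impI)
      fix t assume t: "x < t" "t < y"
      have "(\<Phi> x - \<Phi> t) / (x - t) \<le> (\<Phi> x - \<Phi> y) / (x - y)"
        using convex_on_slope_le(1)[OF conv _ _ t] xy by auto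
      moreover have "(\<Phi> x - \<Phi> t) / (x - t) = (\<Phi> t - \<Phi> x) / (t - x)"
        by (metis minus_diff_eq minus_divide_divide)
      moreover have "(\<Phi> x - \<Phi> y) / (x - y) = (\<Phi> y - \<Phi> x) / (y - x)"
        by (metis minus_diff_eq minus_divide_divide)
      ultimately show "(\<Phi> t - \<Phi> x) / (t - x) \<le> (\<Phi> y - \<Phi> x) / (y - x)" by simp
    qed (use xy in auto)
  qed (simp add: trivial_limit_at_right_real)
  have d2: "(\<Phi> has_real_derivative \<Phi>' y) (at y within {x..y})"
    using DERIV_subset[OF der[of y] sub] xy by simp
  hence l2: "((\<lambda>t. (\<Phi> t - \<Phi> y) / (t - y)) \<longlongrightarrow> \<Phi>' y) (at_left y)"
    using has_field_derivative_iff at_within_Icc_at_left[OF xy(2)] by metis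
  show "(\<Phi> y - \<Phi> x)/(y - x) \<le> \<Phi>' y"
  proof (rule tendsto_lowerbound[OF l2])
    show "\<forall>\<^sub>F t in at_left y. (\<Phi> y - \<Phi> x) / (y - x) \<le> (\<Phi> t - \<Phi> y) / (t - y)"
      unfolding eventually_at_left[OF xy(2)]
    proof (intro exI[of _ x] conjI allI impI)
      fix t assume t: "x < t" "t < y"
      have "(\<Phi> x - \<Phi> y) / (x - y) \<le> (\<Phi> t - \<Phi> y) / (t - y)"
        using convex_on_slope_le(2)[OF conv _ _ t] xy by auto
      moreover have "(\<Phi> x - \<Phi> y) / (x - y) = (\<Phi> y - \<Phi> x) / (y - x)"
        by (metis minus_diff_eq minus_divide_divide)
      ultimately show "(\<Phi> y - \<Phi> x) / (y - x) \<le> (\<Phi> t - \<Phi> y) / (t - y)" by simp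
    qed (use xy in auto)
  qed (simp add: trivial_limit_at_left_real)
qed
lemma exists_T:
  fixes \<Phi> \<Phi>' \<Psi> :: "real \<Rightarrow> real" and C a :: real
  assumes conv: "convex_on {0..} \<Phi>"
    and der: "\<And>t. t \<ge> 0 \<Longrightarrow> (\<Phi> has_real_derivative \<Phi>' t) (at t within {0..})"
    and mono: "mono_on {0..} \<Phi>"
    and Phi_0: "\<Phi> 0 = 0"
    and a: "a \<ge> 0" "\<Phi> a > 0" "(\<lambda>t. 1 / \<Phi> t) integrable_on {a..}"
    and PsiPhi: "\<forall>\<^sub>F t in at_top. \<Psi> (1 / (\<Phi> t * \<Phi>' t)) \<le> C * \<Phi>' t"
  shows "\<exists>T. T > 0 \<and> T \<ge> a \<and> (\<forall>t\<ge>T. \<Psi> (1 / (\<Phi> t * \<Phi>' t)) \<le> C * \<Phi>' t \<and> 1 \<le> \<Phi> t * \<Phi>' t)"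
proof -
  define K where "K = integral {a..} (\<lambda>t. 1 / \<Phi> t)"
  have pos: "\<Phi> t > 0" if "t \<ge> a" for t
    using mono_onD[OF mono, of a t] that a by auto
  have "K \<ge> 0" unfolding K_def
    by (rule integral_nonneg[OF a(3)]) (use pos in \<open>auto intro: less_imp_le\<close>)
  define K' where "K' = K + 1"
  have K': "K' > 0" using \<open>K \<ge> 0\<close> K'_def by simp
  have lowb: "t - a < K' * \<Phi> t" if t: "t > a" for t
  proof -
    have "integral {a..t} (\<lambda>u. 1 / \<Phi> t) \<le> integral {a..t} (\<lambda>u. 1 / \<Phi> u)"
    proof (rule integral_le)
      show "(\<lambda>u. 1 / \<Phi> u) integrable_on {a..t}"
        by (rule integrable_on_subinterval[OF a(3)]) auto
      fix u assume u: "u \<in> {a..t}"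
      have "\<Phi> u \<le> \<Phi> t" using mono_onD[OF mono, of u t] u a by auto
      then show "1 / \<Phi> t \<le> 1 / \<Phi> u" using pos[of u] u
        by (intro divide_left_mono) auto
    qed auto
    also have "\<dots> \<le> K" unfolding K_def
      by (rule integral_subset_le) (use a pos in \<open>auto intro: less_imp_le integrable_on_subinterval\<close>)
    finally have "(t - a) / \<Phi> t \<le> K" using t by simp
    then have "t - a \<le> K * \<Phi> t" using pos[of t] t by (simp add: divide_le_eq)
    then show ?thesis using pos[of t] t K'_def by (simp add: distrib_right)
  qed
  have ev2: "\<forall>\<^sub>F t in at_top. 1 \<le> \<Phi> t * \<Phi>' t"
    unfolding eventually_at_top_linorder
  proof (intro exI[of _ "max (max (2*a) (4*K'^2)) 1 + 1"] allI impI)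
    fix t assume t: "max (max (2*a) (4*K'^2)) 1 + 1 \<le> t"
    hence t1: "t > 1" "t \<ge> 2*a" "t \<ge> 4*K'^2" "t > a" using a by auto
    have d: "(\<Phi> t - \<Phi> 0) / (t - 0) \<le> \<Phi>' t"
      by (rule deriv_slope(2)[OF conv der]) (use t1 in auto)
    hence d': "\<Phi> t / t \<le> \<Phi>' t" using Phi_0 by simp
    have "t / 2 \<le> t - a" using t1 by simp
    also have "\<dots> \<le> K' * \<Phi> t" using lowb[OF t1(4)] by simp
    finally have f1: "t / (2*K') \<le> \<Phi> t" using K' by (simp add: divide_le_eq field_simps)
    have f0: "0 \<le> t / (2*K')" using K' t1 by simp
    have "(t / (2*K')) * (t / (2*K')) \<le> \<Phi> t * \<Phi> t"
      by (rule mult_mono[OF f1 f1]) (use f0 f1 in linarith)+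
    hence "t * t / (4 * K'^2) \<le> \<Phi> t * \<Phi> t" by (simp add: power2_eq_square field_simps)
    hence "t / (4 * K'^2) \<le> \<Phi> t * (\<Phi> t / t)" using t1 by (simp add: field_simps)
    also have "\<dots> \<le> \<Phi> t * \<Phi>' t" by (rule mult_left_mono[OF d']) (use pos[of t] t1 in auto)
    finally have "t / (4 * K'^2) \<le> \<Phi> t * \<Phi>' t" .
    moreover have "1 \<le> t / (4 * K'^2)" using t1 K' by (simp add: le_divide_eq)
    ultimately show "1 \<le> \<Phi> t * \<Phi>' t" by linarith
  qed
  from eventually_conj[OF PsiPhi ev2] obtain T0 where
    T0: "\<And>t. t \<ge> T0 \<Longrightarrow> \<Psi> (1 / (\<Phi> t * \<Phi>' t)) \<le> C * \<Phi>' t \<and> 1 \<le> \<Phi> t * \<Phi>' t"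
    unfolding eventually_at_top_linorder by blast
  show ?thesis
    by (rule exI[of _ "max (max T0 a) 1"]) (use T0 in auto)
qed

lemma meas_test:
  fixes D v :: "real \<Rightarrow> real" and M2 :: "real measure"
  assumes v[measurable]: "v \<in> borel_measurable M2" and D: "mono D"
  shows "(\<lambda>(u,x). ennreal(indicator {T..} u * D u) * indicator {y\<in>space M2. u < v y} x) \<in> borel_measurable (lborel \<Otimes>\<^sub>M M2)"
proof -
  have [measurable]: "D \<in> borel_measurable borel" using borel_measurable_mono[OF D] .
  show ?thesis by measurable
qed

lemma fub_test:
  fixes D v :: "real \<Rightarrow> real" and M2 :: "real measure"
  assumes fm: "finite_measure M2" and v[measurable]: "v \<in> borel_measurable M2" and D: "mono D"
  shows "(\<integral>\<^sup>+u. (\<integral>\<^sup>+x. ennreal(indicator {T..} u * D u) * indicator {y\<in>space M2. u < v y} x \<partial>M2) \<partial>lborel)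
     = (\<integral>\<^sup>+x. (\<integral>\<^sup>+u. ennreal(indicator {T..} u * D u) * indicator {y\<in>space M2. u < v y} x \<partial>lborel) \<partial>M2)"
proof -
  interpret M2: finite_measure M2 by (rule fm)
  interpret pair_sigma_finite lborel M2 by unfold_locales
  show ?thesis
    by (rule Fubini'[symmetric]) (rule meas_test[OF v D])
qed

lemma main_est:
  fixes \<Phi> \<Phi>' \<Psi> :: "real \<Rightarrow> real" and C a T r :: real and I :: "real set" and w :: "real \<Rightarrow> real"
  assumes conv: "convex_on {0..} \<Phi>"
    and der: "\<And>t. t \<ge> 0 \<Longrightarrow> (\<Phi> has_real_derivative \<Phi>' t) (at t within {0..})"
    and mono: "mono_on {0..} \<Phi>"
    and cont: "continuous_on {0..} \<Phi>"
    and Phi_nonneg: "\<And>t. t \<ge> 0 \<Longrightarrow> \<Phi> t \<ge> 0"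
    and a: "a \<ge> 0" "\<Phi> a > 0" "(\<lambda>t. 1 / \<Phi> t) integrable_on {a..}"
    and Psi_nonneg: "\<And>s. s \<in> {0<..1} \<Longrightarrow> \<Psi> s \<ge> 0"
    and Psi_decr: "\<And>s s'. s \<in> {0<..1} \<Longrightarrow> s' \<in> {0<..1} \<Longrightarrow> s \<le> s' \<Longrightarrow> \<Psi> s' \<le> \<Psi> s"
    and sPsi_incr: "mono_on {0<..1} (\<lambda>s. s * \<Psi> s)"
    and C_pos: "C > 0"
    and T: "T > 0" "T \<ge> a" "\<forall>t\<ge>T. \<Psi> (1 / (\<Phi> t * \<Phi>' t)) \<le> C * \<Phi>' t \<and> 1 \<le> \<Phi> t * \<Phi>' t"
    and I: "bounded I" "measure lebesgue I > 0"
    and w: "w \<in> borel_measurable (lebesgue_on I)"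
    and r: "r > 0" "ennreal (1 / measure lebesgue I) * (\<integral>\<^sup>+ x\<in>I. ennreal (\<Phi> (w x / r)) \<partial>lebesgue) \<le> 1"
  shows "n_Psi \<Psi> (norm_distr I w) \<le> ennreal (r * (\<Psi> 1 * T + C * integral {a..} (\<lambda>t. 1 / \<Phi> t) + C))"
proof -
  define m where "m = measure lebesgue I"
  define M2 where "M2 = lebesgue_on I"
  define v where "v = (\<lambda>x. w x / r)"
  define K where "K = integral {a..} (\<lambda>t. 1 / \<Phi> t)"
  define D where "D = (\<lambda>u. \<Phi>' (max T u))"
  define A where "A = (\<lambda>u. {y \<in> space M2. u < v y})"
  define n where "n = (\<lambda>u. measure lebesgue (A u) / m)"
  define g where "g = (\<lambda>n. if n = 0 then 0 else n * \<Psi> n)"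
  define F where "F = (\<lambda>u x. ennreal (indicator {T..} u * D u) * indicator (A u) x)"
  define b1 where "b1 = (\<lambda>u. \<Psi> 1 * indicator {0..T} u)"
  define b2 where "b2 = (\<lambda>u. C * (indicator {a..} u * (1 / \<Phi> u)))"
  define B where "B = (\<lambda>u. ennreal (b1 u) + ennreal (b2 u) + ennreal (C / m) * (\<integral>\<^sup>+x. F u x \<partial>M2))"
  have m: "m > 0" using I m_def by simp
  have Ileb: "I \<in> sets lebesgue" using I(2) measure_notin_sets by force
  have Ilm: "I \<in> lmeasurable" by (rule bounded_set_imp_lmeasurable[OF I(1) Ileb])
  have fm: "finite_measure M2" unfolding M2_def by (rule finite_measure_lebesgue_on[OF Ilm])
  interpret M2: finite_measure M2 by (rule fm)
  interpret pair_sigma_finite lborel M2 by unfold_locales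
  have spM2: "space M2 = I" unfolding M2_def by simp
  have v[measurable]: "v \<in> borel_measurable M2" unfolding v_def M2_def using w by measurable
  have Ameas: "A u \<in> sets M2" for u unfolding A_def by measurable
  have Aleb: "A u \<in> sets lebesgue" "A u \<subseteq> I" for u
    using Ameas[of u] sets_restrict_space_iff[of I lebesgue "A u"] Ileb unfolding M2_def by auto
  have Afin: "emeasure lebesgue (A u) \<noteq> top" for u
    using emeasure_mono[OF Aleb(2)[of u] Ileb] fmeasurableD2[OF Ilm]
    by (rule neq_top_trans[rotated])
  have emA: "emeasure M2 (A u) = ennreal (measure lebesgue (A u))" for u
    unfolding M2_def using emeasure_restrict_space[of I lebesgue "A u"] Ileb Aleb(2)[of u]
      emeasure_eq_ennreal_measure[OF Afin[of u]] by simp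
  have Ale: "measure lebesgue (A u) \<le> m" for u
    unfolding m_def using Aleb[of u] Ilm by (intro measure_mono_fmeasurable) auto
  have n01: "0 \<le> n u" "n u \<le> 1" for u
    unfolding n_def using Ale[of u] m by auto
  have Phipos: "\<Phi> u > 0" if "u \<ge> a" for u
    using mono_onD[OF mono, of a u] that a by auto
  have Tprops: "\<Phi> u > 0" "\<Phi>' u > 0" "1 \<le> \<Phi> u * \<Phi>' u" "\<Psi> (1 / (\<Phi> u * \<Phi>' u)) \<le> C * \<Phi>' u"
    if "u \<ge> T" for u
  proof -
    show p: "\<Phi> u > 0" using Phipos[of u] that T by simp
    show "1 \<le> \<Phi> u * \<Phi>' u" "\<Psi> (1 / (\<Phi> u * \<Phi>' u)) \<le> C * \<Phi>' u" using T(3) that by auto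
    then show "\<Phi>' u > 0" using p by (smt (verit) mult_nonneg_nonpos)
  qed
  have Dmono: "mono D"
  proof (rule monoI)
    fix x y :: real assume "x \<le> y"
    then have le: "max T x \<le> max T y" by simp
    show "D x \<le> D y"
    proof (cases "max T x = max T y")
      case True then show ?thesis by (simp add: D_def)
    next
      case False
      have lt: "max T x < max T y" by (rule order_le_neq_trans[OF le False])
      have "0 \<le> max T x" using T by simp
      from deriv_slope[OF conv der this lt] show ?thesis unfolding D_def by linarith
    qed
  qed
  have [measurable]: "D \<in> borel_measurable borel" using borel_measurable_mono[OF Dmono] .
  have D_nonneg: "indicator {T..} u * D u \<ge> 0" for u
    using Tprops(2)[of u] by (auto simp: indicator_def D_def max_def)
  have Fmeas: "case_prod F \<in> borel_measurable (lborel \<Otimes>\<^sub>M M2)" unfolding F_def A_def by measurable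
  have Fint_meas[measurable]: "(\<lambda>u. \<integral>\<^sup>+x. F u x \<partial>M2) \<in> borel_measurable borel"
    using M2.borel_measurable_nn_integral[OF Fmeas] by simp
  have b2meas[measurable]: "(\<lambda>u. indicator {a..} u * (1 / \<Phi> u)) \<in> borel_measurable borel"
  proof -
    have "continuous_on {a..} (\<lambda>u. 1 / \<Phi> u)"
      by (intro continuous_on_divide continuous_on_const continuous_on_subset[OF cont])
         (use a Phipos in force)+
    from borel_measurable_continuous_on_indicator[OF _ this] show ?thesis by simp
  qed
  have b1meas[measurable]: "(\<lambda>u. ennreal (b1 u)) \<in> borel_measurable borel" unfolding b1_def by measurable
  have b2meas'[measurable]: "(\<lambda>u. ennreal (b2 u)) \<in> borel_measurable borel" unfolding b2_def by measurable
  have Bmeas[measurable]: "B \<in> borel_measurable borel" unfolding B_def by measurable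
  have Psi1: "\<Psi> 1 \<ge> 0" using Psi_nonneg[of 1] by simp
  have nnb2: "0 \<le> indicator {a..} u * (1 / \<Phi> u)" for u
    using Phipos[of u] by (auto simp: indicator_def)
  have K0: "K \<ge> 0" unfolding K_def
    by (rule integral_nonneg[OF a(3)]) (use Phipos in \<open>auto intro: less_imp_le\<close>)
  have I1: "(\<integral>\<^sup>+u. ennreal (b1 u) \<partial>lborel) = ennreal (\<Psi> 1 * T)"
  proof -
    have "(\<integral>\<^sup>+u. ennreal (b1 u) \<partial>lborel) = (\<integral>\<^sup>+u. ennreal (\<Psi> 1) * indicator {0..T} u \<partial>lborel)"
      by (intro nn_integral_cong) (auto simp: b1_def indicator_def)
    also have "\<dots> = ennreal (\<Psi> 1) * ennreal T" using T by (simp add: nn_integral_cmult_indicator)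
    also have "\<dots> = ennreal (\<Psi> 1 * T)" using Psi1 T by (simp add: ennreal_mult)
    finally show ?thesis .
  qed
  have I2: "(\<integral>\<^sup>+u. ennreal (b2 u) \<partial>lborel) = ennreal C * ennreal K"
  proof -
    have "(\<integral>\<^sup>+u. ennreal (b2 u) \<partial>lborel) = (\<integral>\<^sup>+u. ennreal C * ennreal (indicator {a..} u * (1/\<Phi> u)) \<partial>lborel)"
      by (intro nn_integral_cong) (simp only: b2_def ennreal_mult[OF less_imp_le[OF C_pos] nnb2])
    also have "\<dots> = ennreal C * (\<integral>\<^sup>+u. ennreal (indicator {a..} u * (1/\<Phi> u)) \<partial>lborel)"
      by (rule nn_integral_cmult) measurable
    also have "(\<integral>\<^sup>+u. ennreal (indicator {a..} u * (1/\<Phi> u)) \<partial>lborel) = ennreal K"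
      unfolding K_def
      by (rule nn_integral_has_integral_lebesgue[OF _ integrable_integral[OF a(3)]])
         (use Phipos in \<open>auto intro: less_imp_le\<close>)
    finally show ?thesis .
  qed
  have inner: "(\<integral>\<^sup>+u. F u x \<partial>lborel) \<le> ennreal (\<Phi> (v x))" if x: "x \<in> I" for x
  proof (cases "v x < T")
    case True
    have "F u x = 0" for u using True by (auto simp: F_def A_def indicator_def)
    then show ?thesis by simp
  next
    case False
    hence vT: "T \<le> v x" by simp
    have "(\<integral>\<^sup>+u. F u x \<partial>lborel) \<le> (\<integral>\<^sup>+u. ennreal (indicator {T..v x} u * \<Phi>' u) \<partial>lborel)"
      by (intro nn_integral_mono) (use x spM2 in \<open>auto simp: F_def A_def D_def indicator_def\<close>)
    also have "\<dots> = ennreal (\<Phi> (v x) - \<Phi> T)"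
    proof (rule nn_integral_has_integral_lebesgue)
      show "\<And>u. u \<in> {T..v x} \<Longrightarrow> 0 \<le> \<Phi>' u" using Tprops(2) by (auto intro: less_imp_le)
      show "(\<Phi>' has_integral \<Phi> (v x) - \<Phi> T) {T..v x}"
      proof (rule fundamental_theorem_of_calculus[OF vT])
        fix u assume u: "u \<in> {T..v x}"
        have "(\<Phi> has_real_derivative \<Phi>' u) (at u within {T..v x})"
          by (rule DERIV_subset[OF der]) (use u T in auto)
        then show "(\<Phi> has_vector_derivative \<Phi>' u) (at u within {T..v x})"
          by (simp add: has_real_derivative_iff_has_vector_derivative)
      qed
    qed
    also have "\<dots> \<le> ennreal (\<Phi> (v x))" using Phi_nonneg[of T] T by (intro ennreal_leI) simp
    finally show ?thesis .
  qed
  have I3: "(\<integral>\<^sup>+u. ennreal (C/m) * (\<integral>\<^sup>+x. F u x \<partial>M2) \<partial>lborel) \<le> ennreal C"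
  proof -
    have "(\<integral>\<^sup>+u. ennreal (C/m) * (\<integral>\<^sup>+x. F u x \<partial>M2) \<partial>lborel)
        = ennreal (C/m) * (\<integral>\<^sup>+u. (\<integral>\<^sup>+x. F u x \<partial>M2) \<partial>lborel)"
      by (rule nn_integral_cmult) simp
    also have "(\<integral>\<^sup>+u. (\<integral>\<^sup>+x. F u x \<partial>M2) \<partial>lborel) = (\<integral>\<^sup>+x. (\<integral>\<^sup>+u. F u x \<partial>lborel) \<partial>M2)"
      by (rule Fubini'[symmetric, OF Fmeas])
    also have "\<dots> \<le> (\<integral>\<^sup>+x. ennreal (\<Phi> (v x)) \<partial>M2)"
      by (intro nn_integral_mono) (use inner spM2 in auto)
    also have "(\<integral>\<^sup>+x. ennreal (\<Phi> (v x)) \<partial>M2) = (\<integral>\<^sup>+x\<in>I. ennreal (\<Phi> (w x / r)) \<partial>lebesgue)"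
      unfolding M2_def v_def by (rule nn_integral_restrict_space) (use Ileb in simp)
    finally have "(\<integral>\<^sup>+u. ennreal (C/m) * (\<integral>\<^sup>+x. F u x \<partial>M2) \<partial>lborel)
        \<le> ennreal (C/m) * (\<integral>\<^sup>+x\<in>I. ennreal (\<Phi> (w x / r)) \<partial>lebesgue)"
      by (simp add: mult_left_mono)
    also have "\<dots> = ennreal C * (ennreal (1/m) * (\<integral>\<^sup>+x\<in>I. ennreal (\<Phi> (w x / r)) \<partial>lebesgue))"
    proof -
      have "ennreal (C/m) = ennreal C * ennreal (1/m)"
        using ennreal_mult[of C "1/m"] C_pos m by simp
      then show ?thesis by (simp only: mult.assoc)
    qed
    also have "\<dots> \<le> ennreal C * 1"
      using r(2) unfolding m_def by (intro mult_left_mono) auto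
    finally show ?thesis by simp
  qed
  have intB: "(\<integral>\<^sup>+u. B u \<partial>lborel) \<le> ennreal (\<Psi> 1 * T + C * K + C)"
  proof -
    have "(\<integral>\<^sup>+u. B u \<partial>lborel) = (\<integral>\<^sup>+u. ennreal (b1 u) + ennreal (b2 u) \<partial>lborel)
        + (\<integral>\<^sup>+u. ennreal (C/m) * (\<integral>\<^sup>+x. F u x \<partial>M2) \<partial>lborel)"
      unfolding B_def by (rule nn_integral_add) measurable
    also have "(\<integral>\<^sup>+u. ennreal (b1 u) + ennreal (b2 u) \<partial>lborel)
        = (\<integral>\<^sup>+u. ennreal (b1 u) \<partial>lborel) + (\<integral>\<^sup>+u. ennreal (b2 u) \<partial>lborel)"
      by (rule nn_integral_add) measurable
    finally have "(\<integral>\<^sup>+u. B u \<partial>lborel) \<le> ennreal (\<Psi> 1 * T) + ennreal C * ennreal K + ennreal C"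
      using I1 I2 I3 by (simp add: add_left_mono)
    also have "\<dots> = ennreal (\<Psi> 1 * T + C * K + C)"
      using Psi1 T C_pos K0 by (simp add: ennreal_mult ennreal_plus)
    finally show ?thesis .
  qed
  have pw: "ennreal (g (norm_distr I w t)) * indicator {0<..} t \<le> B (t / r)" for t
  proof (cases "t > 0")
    case False then show ?thesis by simp
  next
    case True
    define u where "u = t / r"
    have u: "u > 0" using True r by (simp add: u_def)
    have Nd: "norm_distr I w t = n u"
    proof -
      have "{x \<in> I. w x > t} = A u" unfolding A_def spM2 u_def v_def using r
        by (auto simp: divide_less_cancel)
      then show ?thesis unfolding norm_distr_def n_def m_def by simp
    qed
    have third: "ennreal (C / m) * (\<integral>\<^sup>+x. F u x \<partial>M2) = ennreal (C * (indicator {T..} u * D u) * n u)"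
    proof -
      have "(\<integral>\<^sup>+x. F u x \<partial>M2) = ennreal (indicator {T..} u * D u) * emeasure M2 (A u)"
        unfolding F_def by (rule nn_integral_cmult_indicator[OF Ameas])
      also have "\<dots> = ennreal (indicator {T..} u * D u * measure lebesgue (A u))"
        using emA D_nonneg by (simp add: ennreal_mult)
      finally have e1: "(\<integral>\<^sup>+x. F u x \<partial>M2) = ennreal (indicator {T..} u * D u * measure lebesgue (A u))" .
      have e2: "ennreal (C/m * (indicator {T..} u * D u * measure lebesgue (A u)))
          = ennreal (C/m) * ennreal (indicator {T..} u * D u * measure lebesgue (A u))"
        by (rule ennreal_mult) (use C_pos m D_nonneg[of u] in auto)
      have "ennreal (C/m) * (\<integral>\<^sup>+x. F u x \<partial>M2) = ennreal (C/m * (indicator {T..} u * D u * measure lebesgue (A u)))"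
        by (simp only: e1 e2)
      also have "C/m * (indicator {T..} u * D u * measure lebesgue (A u)) = C * (indicator {T..} u * D u) * n u"
        unfolding n_def by (simp add: field_simps)
      finally show ?thesis .
    qed
    have nn1: "0 \<le> b1 u" using Psi1 by (simp add: b1_def)
    have nn2: "0 \<le> b2 u" unfolding b2_def by (rule mult_nonneg_nonneg[OF less_imp_le[OF C_pos] nnb2])
    have nn3: "0 \<le> C * (indicator {T..} u * D u) * n u" using C_pos D_nonneg[of u] n01[of u] by simp
    have real: "g (n u) \<le> b1 u + b2 u + C * (indicator {T..} u * D u) * n u"
    proof (cases "n u = 0")
      case True then show ?thesis using nn1 nn2 nn3 by (simp add: g_def)
    next
      case False
      hence nu: "n u \<in> {0<..1}" using n01[of u] by auto
      have gv: "g (n u) = n u * \<Psi> (n u)" using False g_def by simp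
      show ?thesis
      proof (cases "u \<le> T")
        case True
        have "n u * \<Psi> (n u) \<le> 1 * \<Psi> 1" using mono_onD[OF sPsi_incr, of "n u" 1] nu by auto
        moreover have "b1 u = \<Psi> 1" using True u by (simp add: b1_def)
        ultimately show ?thesis using gv nn2 nn3 by simp
      next
        case False
        hence uT: "u \<ge> T" by simp
        define s where "s = 1 / (\<Phi> u * \<Phi>' u)"
        have s: "s \<in> {0<..1}" using Tprops[OF uT] unfolding s_def by auto
        have PsiS: "\<Psi> s \<le> C * \<Phi>' u" using Tprops(4)[OF uT] s_def by simp
        show ?thesis
        proof (cases "n u \<le> s")
          case True
          have "n u * \<Psi> (n u) \<le> s * \<Psi> s" using mono_onD[OF sPsi_incr] nu s True by auto
          also have "\<dots> \<le> s * (C * \<Phi>' u)" using PsiS s by (intro mult_left_mono) auto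
          also have "\<dots> = C / \<Phi> u" using Tprops[OF uT] unfolding s_def by (simp add: field_simps)
          also have "\<dots> = b2 u" using uT T by (simp add: b2_def)
          finally show ?thesis using gv nn1 nn3 by simp
        next
          case False
          have "\<Psi> (n u) \<le> \<Psi> s" using Psi_decr[of s "n u"] nu s False by auto
          hence "n u * \<Psi> (n u) \<le> n u * (C * \<Phi>' u)" using PsiS nu by (intro mult_left_mono) auto
          also have "\<dots> = C * (indicator {T..} u * D u) * n u" using uT by (simp add: D_def)
          finally show ?thesis using gv nn1 nn2 by simp
        qed
      qed
    qed
    have "ennreal (g (n u)) \<le> ennreal (b1 u + b2 u + C * (indicator {T..} u * D u) * n u)"
      by (rule ennreal_leI[OF real])
    also have "\<dots> = B u" unfolding B_def third using nn1 nn2 nn3 by (simp add: ennreal_plus)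
    finally show ?thesis using True Nd u_def by simp
  qed
  have "n_Psi \<Psi> (norm_distr I w) = (\<integral>\<^sup>+t. ennreal (g (norm_distr I w t)) * indicator {0<..} t \<partial>lborel)"
    unfolding n_Psi_def g_def by simp
  also have "\<dots> \<le> (\<integral>\<^sup>+t. B (t / r) \<partial>lborel)" by (intro nn_integral_mono pw)
  also have "(\<integral>\<^sup>+t. B (t / r) \<partial>lborel) = ennreal r * (\<integral>\<^sup>+u. B u \<partial>lborel)"
  proof -
    have "(\<lambda>t. B (t / r)) \<in> borel_measurable borel" by measurable
    from nn_integral_real_affine[OF this, of r 0] show ?thesis using r by simp
  qed
  also have "\<dots> \<le> ennreal r * ennreal (\<Psi> 1 * T + C * K + C)" by (intro mult_left_mono intB) simp
  also have "\<dots> = ennreal (r * (\<Psi> 1 * T + C * K + C))"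
    using r Psi1 T C_pos K0 by (simp add: ennreal_mult)
  finally show ?thesis unfolding K_def .
qed

theorem lemma2p1:
  fixes \<Phi> \<Phi>' \<Psi> :: "real \<Rightarrow> real" and C :: real
  assumes Phi_cont: "continuous_on {0..} \<Phi>"
    and Phi_mono: "mono_on {0..} \<Phi>"
    and Phi_convex: "convex_on {0..} \<Phi>"
    and Phi_deriv: "\<And>t. t \<ge> 0 \<Longrightarrow> (\<Phi> has_real_derivative \<Phi>' t) (at t within {0..})"
    and Phi_nonneg: "\<And>t. t \<ge> 0 \<Longrightarrow> \<Phi> t \<ge> 0"
    and Phi_0: "\<Phi> 0 = 0"
    and Phi_int: "\<exists>a. a \<ge> 0 \<and> \<Phi> a > 0 \<and> (\<lambda>t. 1 / \<Phi> t) integrable_on {a..}"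
    and Psi_nonneg: "\<And>s. s \<in> {0<..1} \<Longrightarrow> \<Psi> s \<ge> 0"
    and Psi_decr: "\<And>s s'. s \<in> {0<..1} \<Longrightarrow> s' \<in> {0<..1} \<Longrightarrow> s \<le> s' \<Longrightarrow> \<Psi> s' \<le> \<Psi> s"
    and sPsi_incr: "mono_on {0<..1} (\<lambda>s. s * \<Psi> s)"
    and C_pos: "C > 0"
    and PsiPhi: "\<forall>\<^sub>F t in at_top. \<Psi> (1 / (\<Phi> t * \<Phi>' t)) \<le> C * \<Phi>' t"
  shows "\<exists>C'::real. \<forall>(I::real set) (w::real \<Rightarrow> real).
           is_interval I \<and> bounded I \<and> measure lebesgue I > 0 \<and>
           w \<in> borel_measurable (lebesgue_on I) \<and> (\<forall>x\<in>I. w x \<ge> 0) \<longrightarrow>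
           n_Psi \<Psi> (norm_distr I w) \<le> ennreal C' * luxemburg_norm \<Phi> I w"
proof -
  obtain a where a: "a \<ge> 0" "\<Phi> a > 0" "(\<lambda>t. 1 / \<Phi> t) integrable_on {a..}"
    using Phi_int by blast
  obtain T where T: "T > 0" "T \<ge> a" "\<forall>t\<ge>T. \<Psi> (1 / (\<Phi> t * \<Phi>' t)) \<le> C * \<Phi>' t \<and> 1 \<le> \<Phi> t * \<Phi>' t"
    using exists_T[OF Phi_convex Phi_deriv Phi_mono Phi_0 a PsiPhi] by blast
  define K where "K = integral {a..} (\<lambda>t. 1 / \<Phi> t)"
  define C' where "C' = \<Psi> 1 * T + C * K + C"
  have pos: "\<Phi> x > 0" if "x \<ge> a" for x using mono_onD[OF Phi_mono, of a x] that a by auto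
  have K0: "K \<ge> 0" unfolding K_def
    by (rule integral_nonneg[OF a(3)]) (use pos in \<open>auto intro: less_imp_le\<close>)
  have C'pos: "C' > 0" unfolding C'_def
    using mult_nonneg_nonneg[OF Psi_nonneg[of 1] less_imp_le[OF T(1)]]
      mult_nonneg_nonneg[OF less_imp_le[OF C_pos] K0] C_pos by simp
  show ?thesis
  proof (intro exI[of _ C'] allI impI)
    fix I :: "real set" and w :: "real \<Rightarrow> real"
    assume H: "is_interval I \<and> bounded I \<and> measure lebesgue I > 0 \<and>
           w \<in> borel_measurable (lebesgue_on I) \<and> (\<forall>x\<in>I. w x \<ge> 0)"
    define P where "P = (\<lambda>r. ennreal (1 / measure lebesgue I) * (\<integral>\<^sup>+ x\<in>I. ennreal (\<Phi> (w x / r)) \<partial>lebesgue) \<le> 1)"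
    define R where "R = {r. r > 0 \<and> P r}"
    have LN: "luxemburg_norm \<Phi> I w = Inf (ennreal ` R)"
      unfolding luxemburg_norm_def R_def P_def by (rule arg_cong[where f=Inf]) auto
    have bound: "n_Psi \<Psi> (norm_distr I w) \<le> ennreal (C' * r)" if "r \<in> R" for r
    proof -
      have "n_Psi \<Psi> (norm_distr I w) \<le> ennreal (r * C')"
        unfolding C'_def K_def
        by (rule main_est[OF Phi_convex Phi_deriv Phi_mono Phi_cont Phi_nonneg a Psi_nonneg
              Psi_decr sPsi_incr C_pos T])
           (use H that in \<open>auto simp: R_def P_def\<close>)
      then show ?thesis by (simp add: mult.commute)
    qed
    show "n_Psi \<Psi> (norm_distr I w) \<le> ennreal C' * luxemburg_norm \<Phi> I w"
    proof (cases "R = {}")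
      case True
      then show ?thesis unfolding LN using C'pos by (simp add: ennreal_mult_top)
    next
      case False
      have bdd: "bdd_below R" unfolding R_def by (rule bdd_belowI[of _ 0]) auto
      define m0 where "m0 = Inf R"
      have m0: "m0 \<ge> 0" unfolding m0_def using False by (intro cInf_greatest) (auto simp: R_def)
      have "ennreal m0 \<le> Inf (ennreal ` R)"
        by (rule Inf_greatest) (use bdd in \<open>auto simp: m0_def intro!: ennreal_leI cInf_lower\<close>)
      have main: "n_Psi \<Psi> (norm_distr I w) \<le> ennreal (C' * m0)"
      proof (rule ennreal_le_epsilon)
        fix e :: real assume e: "0 < e"
        have "Inf R < m0 + e / C'" using e C'pos m0_def by simp
        then obtain r where r: "r \<in> R" "r < m0 + e / C'"
          using cInf_less_iff[OF False bdd] by blast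
        have "n_Psi \<Psi> (norm_distr I w) \<le> ennreal (C' * r)" by (rule bound[OF r(1)])
        also have "\<dots> \<le> ennreal (C' * m0 + e)"
        proof (rule ennreal_leI)
          have "C' * r \<le> C' * (m0 + e / C')" using r(2) C'pos by (intro mult_left_mono) auto
          moreover have "C' * (m0 + e / C') = C' * m0 + e" using C'pos by (simp add: distrib_left)
          ultimately show "C' * r \<le> C' * m0 + e" by linarith
        qed
        also have "\<dots> = ennreal (C' * m0) + ennreal e"
          using C'pos m0 e by (intro ennreal_plus) auto
        finally show "n_Psi \<Psi> (norm_distr I w) \<le> ennreal (C' * m0) + ennreal e" .
      qed
      also have "\<dots> = ennreal C' * ennreal m0" using C'pos m0 by (simp add: ennreal_mult)
      also have "\<dots> \<le> ennreal C' * Inf (ennreal ` R)"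
        by (intro mult_left_mono) (use \<open>ennreal m0 \<le> Inf (ennreal ` R)\<close> in auto)
      finally show ?thesis unfolding LN .
    qed
  qed
qed

end
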